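(* Let $f$ be a ternary cubic form with $f_{333}\neq0$, $\Delta_{333}\neq0$ and $f_{133}=f_{233}=0$. Then $f$ is completely reducible (a product of three linear forms) if and only if $$f_{113}(4f_{113}f_{223}-f_{123}^2)+3(f_{112}^2-3f_{111}f_{122})f_{333}=0,$$ $$f_{123}(4f_{113}f_{223}-f_{123}^2)+3(f_{112}f_{122}-9f_{111}f_{222})f_{333}=0,$$ $$f_{223}(4f_{113}f_{223}-f_{123}^2)+3(f_{122}^2-3f_{112}f_{222})f_{333}=0.$$
   Context: A ternary cubic form is written $f=\sum_{1\le i\le j\le k\le3}f_{ijk}x_ix_jx_k$ with complex coefficients; $\Delta_{ijk}$ denotes the coefficient of $x_ix_jx_k$ in the Hessian $\Delta=\tfrac12\det(\partial^2f/\partial x_i\partial x_j)$. *)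

theory Defs
  imports "HOL-Computational_Algebra.Polynomial"
begin

text \<open>Polynomials in three variables x1, x2, x3 over the complex numbers are
  represented as iterated univariate polynomials: x3 is the outermost
  variable, x1 the innermost.\<close>

type_synonym poly3 = "complex poly poly poly"

definition var3 :: "nat \<Rightarrow> poly3" where
  "var3 i = (if i = 1 then [:[:[:0, 1:]:]:]
             else if i = 2 then [:[:0, 1:]:]
             else [:0, 1:])"

definition const3 :: "complex \<Rightarrow> poly3" where
  "const3 a = [:[:[:a:]:]:]"

definition mcoeff :: "poly3 \<Rightarrow> nat \<Rightarrow> nat \<Rightarrow> nat \<Rightarrow> complex" where
  "mcoeff p a b c = coeff (coeff (coeff p c) b) a"

definition pdiff3 :: "nat \<Rightarrow> poly3 \<Rightarrow> poly3" where
  "pdiff3 i p = (if i = 1 then map_poly (map_poly pderiv) p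
                 else if i = 2 then map_poly pderiv p
                 else pderiv p)"

definition cubic :: "(nat \<Rightarrow> nat \<Rightarrow> nat \<Rightarrow> complex) \<Rightarrow> poly3" where
  "cubic f = (\<Sum>i\<in>{1..3}. \<Sum>j\<in>{i..3}. \<Sum>k\<in>{j..3}.
                const3 (f i j k) * var3 i * var3 j * var3 k)"

definition det3 :: "(nat \<Rightarrow> nat \<Rightarrow> 'a::comm_ring_1) \<Rightarrow> 'a" where
  "det3 M = M 1 1 * M 2 2 * M 3 3 + M 1 2 * M 2 3 * M 3 1 + M 1 3 * M 2 1 * M 3 2
          - M 1 3 * M 2 2 * M 3 1 - M 1 2 * M 2 1 * M 3 3 - M 1 1 * M 2 3 * M 3 2"

definition hessian :: "poly3 \<Rightarrow> poly3" where
  "hessian p = const3 (1/2) * det3 (\<lambda>i j. pdiff3 i (pdiff3 j p))"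

definition cf3 :: "poly3 \<Rightarrow> nat \<Rightarrow> nat \<Rightarrow> nat \<Rightarrow> complex" where
  "cf3 p i j k = mcoeff p (length (filter (\<lambda>t. t = 1) [i,j,k]))
                          (length (filter (\<lambda>t. t = 2) [i,j,k]))
                          (length (filter (\<lambda>t. t = 3) [i,j,k]))"

definition linear_form :: "complex \<Rightarrow> complex \<Rightarrow> complex \<Rightarrow> poly3" where
  "linear_form a b c = const3 a * var3 1 + const3 b * var3 2 + const3 c * var3 3"

definition completely_reducible :: "poly3 \<Rightarrow> bool" where
  "completely_reducible p \<longleftrightarrow>
     (\<exists>a1 b1 c1 a2 b2 c2 a3 b3 c3.
        p = linear_form a1 b1 c1 * linear_form a2 b2 c2 * linear_form a3 b3 c3)"

end

theory Submission
  imports Defs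
begin

lemma cubic_nf: "cubic f = [: [: [:0,0,0,f 1 1 1:], [:0,0,f 1 1 2:], [:0,f 1 2 2:], [:f 2 2 2:] :],
   [: [:0,0,f 1 1 3:], [:0, f 1 2 3:], [:f 2 2 3:] :],
   [: [:0, f 1 3 3:], [:f 2 3 3:] :], [:[:f 3 3 3:]:] :]"
  unfolding cubic_def var3_def const3_def
  by (simp add: numeral_eq_Suc  algebra_simps)

lemma hess333: assumes "f 1 3 3 = 0" "f 2 3 3 = 0"
  shows "cf3 (hessian (cubic f)) 3 3 3 = 3 * f 3 3 3 * (4 * f 1 1 3 * f 2 2 3 - (f 1 2 3)^2)"
  unfolding cf3_def mcoeff_def hessian_def cubic_nf det3_def pdiff3_def const3_def
  using assms by (simp add: pderiv_pCons map_poly_pCons algebra_simps power2_eq_square)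

lemma lf_prod: "linear_form a1 b1 c1 * linear_form a2 b2 c2 * linear_form a3 b3 c3 =
  [: [: [:0,0,0,a1*a2*a3:], [:0,0,a1*a2*b3 + a1*b2*a3 + b1*a2*a3:], [:0,a1*b2*b3 + b1*a2*b3 + b1*b2*a3:], [:b1*b2*b3:] :],
   [: [:0,0,a1*a2*c3 + a1*c2*a3 + c1*a2*a3:], [:0, a1*b2*c3 + a1*c2*b3 + b1*a2*c3 + b1*c2*a3 + c1*a2*b3 + c1*b2*a3:], [:b1*b2*c3 + b1*c2*b3 + c1*b2*b3:] :],
   [: [:0, a1*c2*c3 + c1*a2*c3 + c1*c2*a3:], [:b1*c2*c3 + c1*b2*c3 + c1*c2*b3:] :], [:[:c1*c2*c3:]:] :]"
  unfolding linear_form_def var3_def const3_def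
  by (simp add: algebra_simps)

lemma fwd:
  fixes a1 b1 c1 a2 b2 c2 a3 b3 c3 :: complex
  assumes F: "c1*c2*c3 \<noteq> 0"
  and z1: "a1*c2*c3 + c1*a2*c3 + c1*c2*a3 = 0"
  and z2: "b1*c2*c3 + c1*b2*c3 + c1*c2*b3 = 0"
  and "s = a1*a2*a3" and "t = a1*a2*b3 + a1*b2*a3 + b1*a2*a3"
  and "u = a1*b2*b3 + b1*a2*b3 + b1*b2*a3" and "v = b1*b2*b3"
  and "p = a1*a2*c3 + a1*c2*a3 + c1*a2*a3"
  and "q = a1*b2*c3 + a1*c2*b3 + b1*a2*c3 + b1*c2*a3 + c1*a2*b3 + c1*b2*a3"
  and "r = b1*b2*c3 + b1*c2*b3 + c1*b2*b3" and "a = c1*c2*c3"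
  shows "p * (4*p*r - q^2) + 3*(t^2 - 3*s*u)*a = 0 \<and>
         q * (4*p*r - q^2) + 3*(t*u - 9*s*v)*a = 0 \<and>
         r * (4*p*r - q^2) + 3*(u^2 - 3*t*v)*a = 0"
proof -
  have c: "c1 \<noteq> 0" "c2 \<noteq> 0" "c3 \<noteq> 0" using F by auto
  define x1 x2 x3 y1 y2 y3 where "x1 = a1/c1" "x2 = a2/c2" "x3 = a3/c3"
    "y1 = b1/c1" "y2 = b2/c2" "y3 = b3/c3"
  have A: "a1 = x1*c1" "a2 = x2*c2" "a3 = x3*c3" "b1 = y1*c1" "b2 = y2*c2" "b3 = y3*c3"
    using c by (simp_all add: x1_x2_x3_y1_y2_y3_def)
  have "c1*c2*c3*(x1+x2+x3) = 0" using z1 unfolding A by (simp add: algebra_simps)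
  hence "x1+x2+x3 = 0" using F by simp
  hence x3: "x3 = -x1-x2" by algebra
  have "c1*c2*c3*(y1+y2+y3) = 0" using z2 unfolding A by (simp add: algebra_simps)
  hence "y1+y2+y3 = 0" using F by simp
  hence y3: "y3 = -y1-y2" by algebra
  show ?thesis unfolding assms(4-) A x3 y3 by algebra
qed

lemma quad_factor: fixes P Q R :: complex
  shows "\<exists>m1 n1 m2 n2. m1*m2 = P \<and> m1*n2+n1*m2 = Q \<and> n1*n2 = R"
proof (cases "P = 0")
  case True thus ?thesis by (rule_tac x=0 in exI, rule_tac x=1 in exI, rule_tac x=Q in exI, rule_tac x=R in exI) simp
next
  case False
  define w where "w = csqrt (Q^2 - 4*P*R)"
  have w: "w^2 = Q^2 - 4*P*R" by (simp add: w_def)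
  define n1 where "n1 = (Q + w)/(2*P)"
  have n1: "P*n1^2 - Q*n1 + R = 0"
  proof -
    have "2*P*n1 = Q + w" using False by (simp add: n1_def)
    thus ?thesis using w False by algebra
  qed
  show ?thesis
    by (rule exI[of _ 1], rule exI[of _ n1], rule exI[of _ P], rule exI[of _ "Q - P*n1"])
       (use n1 in algebra)
qed

lemma cube_root: fixes z :: complex shows "\<exists>l. l^3 = z"
proof (cases "z = 0")
  case True thus ?thesis by auto
next
  case False
  have "(complex_of_real (root 3 (cmod z)) * cis (Arg z / real 3) * 1) \<in> {za. za ^ 3 = z}"
    by (rule bij_betw_apply[OF bij_betw_nth_root_unity[OF False, of 3]]) auto
  thus ?thesis by blast
qed
lemma change_basis:
  fixes m1 n1 m2 n2 s t u v :: complex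
  assumes d: "m1*n2 - n1*m2 \<noteq> 0"
  shows "\<exists>s' t' u' v'. s = s'*m1^3 + t'*m1^2*m2 + u'*m1*m2^2 + v'*m2^3 \<and>
     t = 3*s'*m1^2*n1 + t'*(m1^2*n2 + 2*m1*n1*m2) + u'*(n1*m2^2 + 2*m1*m2*n2) + 3*v'*m2^2*n2 \<and>
     u = 3*s'*m1*n1^2 + t'*(n1^2*m2 + 2*m1*n1*n2) + u'*(m1*n2^2 + 2*n1*m2*n2) + 3*v'*m2*n2^2 \<and>
     v = s'*n1^3 + t'*n1^2*n2 + u'*n1*n2^2 + v'*n2^3"
proof -
  define d where "d = m1*n2 - n1*m2"
  define di where "di = inverse d"
  have ddi: "d*di = 1" using d unfolding di_def d_def by simp
  define X1 X2 Y1 Y2 where "X1 = n2*di" "X2 = -n1*di" "Y1 = -m2*di" "Y2 = m1*di"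
  have r: "m1*X1 + n1*Y1 = 1" "m1*X2+n1*Y2 = 0" "m2*X1+n2*Y1 = 0" "m2*X2+n2*Y2 = 1"
     "X1*m1+X2*m2 = 1" "X1*n1+X2*n2 = 0" "Y1*m1+Y2*m2 = 0" "Y1*n1+Y2*n2 = 1"
    using ddi unfolding X1_X2_Y1_Y2_def d_def by algebra+
  show ?thesis
    apply (rule exI[of _ "s*X1^3 + t*X1^2*Y1 + u*X1*Y1^2 + v*Y1^3"])
    apply (rule exI[of _ "3*s*X1^2*X2 + t*(X1^2*Y2 + 2*X1*X2*Y1) + u*(X2*Y1^2 + 2*X1*Y1*Y2) + 3*v*Y1^2*Y2"])
    apply (rule exI[of _ "3*s*X1*X2^2 + t*(X2^2*Y1 + 2*X1*X2*Y2) + u*(X1*Y2^2 + 2*X2*Y1*Y2) + 3*v*Y1*Y2^2"])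
    apply (rule exI[of _ "s*X2^3 + t*X2^2*Y2 + u*X2*Y2^2 + v*Y2^3"])
    using r by algebra
qed
lemma cardano_shape:
  fixes w U1 U2 V1 V2 a :: complex
  assumes w: "w^2 + w + 1 = 0"
  defines "a1 \<equiv> a*(U1+V1)" and "b1 \<equiv> a*(U2+V2)" and "c1 \<equiv> a"
  and "a2 \<equiv> w*U1+w^2*V1" and "b2 \<equiv> w*U2+w^2*V2" and "c2 \<equiv> (1::complex)"
  and "a3 \<equiv> w^2*U1+w*V1" and "b3 \<equiv> w^2*U2+w*V2" and "c3 \<equiv> (1::complex)"
  shows "a1*a2*a3 = a*(U1^3+V1^3)"
   "a1*a2*b3 + a1*b2*a3 + b1*a2*a3 = 3*a*(U1^2*U2+V1^2*V2)"
   "a1*b2*b3 + b1*a2*b3 + b1*b2*a3 = 3*a*(U1*U2^2+V1*V2^2)"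
   "b1*b2*b3 = a*(U2^3+V2^3)"
   "a1*a2*c3 + a1*c2*a3 + c1*a2*a3 = -3*a*U1*V1"
   "a1*b2*c3 + a1*c2*b3 + b1*a2*c3 + b1*c2*a3 + c1*a2*b3 + c1*b2*a3 = -3*a*(U1*V2+U2*V1)"
   "b1*b2*c3 + b1*c2*b3 + c1*b2*b3 = -3*a*U2*V2"
   "a1*c2*c3 + c1*a2*c3 + c1*c2*a3 = 0"
   "b1*c2*c3 + c1*b2*c3 + c1*c2*b3 = 0"
   "c1*c2*c3 = a"
  using w unfolding assms(2-) by (algebra | simp)+

lemma rev_alg:
  fixes a p q r s t u v :: complex
  assumes a: "a \<noteq> 0" and D: "4*p*r - q^2 \<noteq> 0"
  and E1: "p * (4*p*r - q^2) + 3*(t^2 - 3*s*u)*a = 0"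
  and E2: "q * (4*p*r - q^2) + 3*(t*u - 9*s*v)*a = 0"
  and E3: "r * (4*p*r - q^2) + 3*(u^2 - 3*t*v)*a = 0"
  shows "\<exists>a1 b1 c1 a2 b2 c2 a3 b3 c3. s = a1*a2*a3 \<and> t = a1*a2*b3 + a1*b2*a3 + b1*a2*a3 \<and>
    u = a1*b2*b3 + b1*a2*b3 + b1*b2*a3 \<and> v = b1*b2*b3 \<and>
    p = a1*a2*c3 + a1*c2*a3 + c1*a2*a3 \<and>
    q = a1*b2*c3 + a1*c2*b3 + b1*a2*c3 + b1*c2*a3 + c1*a2*b3 + c1*b2*a3 \<and>
    r = b1*b2*c3 + b1*c2*b3 + c1*b2*b3 \<and>
    0 = a1*c2*c3 + c1*a2*c3 + c1*c2*a3 \<and> 0 = b1*c2*c3 + c1*b2*c3 + c1*c2*b3 \<and>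
    a = c1*c2*c3"
proof -
  obtain m1 n1 m2 n2 where mq: "m1*m2 = -p/a" "m1*n2+n1*m2 = -q/a" "n1*n2 = -r/a"
    using quad_factor by blast
  have P: "p = -a*(m1*m2)" "q = -a*(m1*n2+n1*m2)" "r = -a*(n1*n2)"
    using mq a by (auto simp: field_simps)
  have Dd: "4*p*r - q^2 = - (a^2*(m1*n2-n1*m2)^2)" unfolding P by algebra
  hence d: "m1*n2 - n1*m2 \<noteq> 0" using D by auto
  obtain s' t' u' v' where S: "s = s'*m1^3 + t'*m1^2*m2 + u'*m1*m2^2 + v'*m2^3"
     "t = 3*s'*m1^2*n1 + t'*(m1^2*n2 + 2*m1*n1*m2) + u'*(n1*m2^2 + 2*m1*m2*n2) + 3*v'*m2^2*n2"
     "u = 3*s'*m1*n1^2 + t'*(n1^2*m2 + 2*m1*n1*n2) + u'*(m1*n2^2 + 2*n1*m2*n2) + 3*v'*m2*n2^2"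
     "v = s'*n1^3 + t'*n1^2*n2 + u'*n1*n2^2 + v'*n2^3"
    using change_basis[OF d] by blast
  define G1 G2 G3 where "G1 = 3*(t'^2-3*s'*u')" "G2 = a^2 + 3*(t'*u'-9*s'*v')" "G3 = 3*(u'^2-3*t'*v')"
  define dd where "dd = m1*n2 - n1*m2"
  have "p * (4*p*r - q^2) + 3*(t^2 - 3*s*u)*a = a*dd^2*(G1*m1^2 + G2*m1*m2 + G3*m2^2)"
    unfolding Dd unfolding P S G1_G2_G3_def dd_def by algebra
  hence e1: "G1*m1^2 + G2*m1*m2 + G3*m2^2 = 0" using E1 a d unfolding dd_def by simp
  have "q * (4*p*r - q^2) + 3*(t*u - 9*s*v)*a = a*dd^2*(2*G1*m1*n1 + G2*(m1*n2+n1*m2) + 2*G3*m2*n2)"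
    unfolding Dd unfolding P S G1_G2_G3_def dd_def by algebra
  hence e2: "2*G1*m1*n1 + G2*(m1*n2+n1*m2) + 2*G3*m2*n2 = 0" using E2 a d unfolding dd_def by simp
  have "r * (4*p*r - q^2) + 3*(u^2 - 3*t*v)*a = a*dd^2*(G1*n1^2 + G2*n1*n2 + G3*n2^2)"
    unfolding Dd unfolding P S G1_G2_G3_def dd_def by algebra
  hence e3: "G1*n1^2 + G2*n1*n2 + G3*n2^2 = 0" using E3 a d unfolding dd_def by simp
  have "dd^2*G1 = 0" using e1 e2 e3 unfolding dd_def by algebra
  hence g1: "G1 = 0" using d unfolding dd_def by simp
  have "dd^2*G3 = 0" using e1 e2 e3 unfolding dd_def by algebra
  hence g3: "G3 = 0" using d unfolding dd_def by simp
  have "dd^2*G2 = 0" using e1 e2 e3 g1 g3 unfolding dd_def by algebra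
  hence g2: "G2 = 0" using d unfolding dd_def by simp
  have h1: "t'^2 = 3*s'*u'" using g1 unfolding G1_G2_G3_def by algebra
  have h3: "u'^2 = 3*t'*v'" using g3 unfolding G1_G2_G3_def by algebra
  have h2: "t'*u'-9*s'*v' = - (a^2)/3" using g2 unfolding G1_G2_G3_def by (simp add: field_simps)
  have "t'*u'*(t'*u'-9*s'*v') = 0" using h1 h3 by algebra
  hence "t'*u' = 0" using h2 a by simp
  hence tu: "t' = 0" "u' = 0" using h1 h3 by auto
  have sv: "27*s'*v' = a^2" using h2 tu by (simp add: field_simps)
  hence s0: "s' \<noteq> 0" using a by auto
  obtain l where l: "l^3 = s'/a" using cube_root by blast
  have l0: "l \<noteq> 0" using l s0 a by auto
  define k where "k = inverse (3*l)"
  have lk: "3*l*k = 1" using l0 unfolding k_def by simp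
  have al: "a*l^3 = s'" using l a by simp
  have ak: "a*k^3 = v'"
  proof -
    have "27*s'*(a*k^3) = a^2 * (3*l*k)^3" unfolding al[symmetric]
      by (simp add: power_mult_distrib power2_eq_square algebra_simps)
    also have "\<dots> = 27*s'*v'" using lk sv by simp
    finally show ?thesis using s0 by simp
  qed
  define c where "c = csqrt (-3)"
  have c2: "c^2 = -3" unfolding c_def by (rule power2_csqrt)
  define w where "w = (-1 + c) / 2"
  have w: "w^2 + w + 1 = 0"
  proof -
    have "2*w = -1 + c" unfolding w_def by simp
    with c2 show ?thesis by algebra
  qed
  define U1 U2 V1 V2 where "U1 = l*m1" "U2 = l*n1" "V1 = k*m2" "V2 = k*n2"
  show ?thesis
    apply (rule exI[of _ "a*(U1+V1)"], rule exI[of _ "a*(U2+V2)"], rule exI[of _ a])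
    apply (rule exI[of _ "w*U1+w^2*V1"], rule exI[of _ "w*U2+w^2*V2"], rule exI[of _ 1])
    apply (rule exI[of _ "w^2*U1+w*V1"], rule exI[of _ "w^2*U2+w*V2"], rule exI[of _ 1])
    unfolding cardano_shape[OF w]
    unfolding P S tu U1_U2_V1_V2_def al[symmetric] ak[symmetric]
    apply (intro conjI)
           apply algebra
          apply algebra
         apply algebra
        apply algebra
    using lk apply algebra
    using lk apply algebra
    using lk apply algebra
    using w apply algebra
    using w apply algebra
    by simp
qed

theorem lemma10p2:
  fixes f :: "nat \<Rightarrow> nat \<Rightarrow> nat \<Rightarrow> complex"
  assumes "f 3 3 3 \<noteq> 0"
    and "cf3 (hessian (cubic f)) 3 3 3 \<noteq> 0"
    and "f 1 3 3 = 0" and "f 2 3 3 = 0"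
  shows "completely_reducible (cubic f) \<longleftrightarrow>
    (f 1 1 3 * (4 * f 1 1 3 * f 2 2 3 - (f 1 2 3)\<^sup>2)
       + 3 * ((f 1 1 2)\<^sup>2 - 3 * f 1 1 1 * f 1 2 2) * f 3 3 3 = 0 \<and>
     f 1 2 3 * (4 * f 1 1 3 * f 2 2 3 - (f 1 2 3)\<^sup>2)
       + 3 * (f 1 1 2 * f 1 2 2 - 9 * f 1 1 1 * f 2 2 2) * f 3 3 3 = 0 \<and>
     f 2 2 3 * (4 * f 1 1 3 * f 2 2 3 - (f 1 2 3)\<^sup>2)
       + 3 * ((f 1 2 2)\<^sup>2 - 3 * f 1 1 2 * f 2 2 2) * f 3 3 3 = 0)"
proof
  assume "completely_reducible (cubic f)"
  then obtain a1 b1 c1 a2 b2 c2 a3 b3 c3 where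
    h: "cubic f = linear_form a1 b1 c1 * linear_form a2 b2 c2 * linear_form a3 b3 c3"
    unfolding completely_reducible_def by blast
  have eqs: "f 1 1 1 = a1*a2*a3" "f 1 1 2 = a1*a2*b3 + a1*b2*a3 + b1*a2*a3"
    "f 1 2 2 = a1*b2*b3 + b1*a2*b3 + b1*b2*a3" "f 2 2 2 = b1*b2*b3"
    "f 1 1 3 = a1*a2*c3 + a1*c2*a3 + c1*a2*a3"
    "f 1 2 3 = a1*b2*c3 + a1*c2*b3 + b1*a2*c3 + b1*c2*a3 + c1*a2*b3 + c1*b2*a3"
    "f 2 2 3 = b1*b2*c3 + b1*c2*b3 + c1*b2*b3"
    "f 1 3 3 = a1*c2*c3 + c1*a2*c3 + c1*c2*a3"
    "f 2 3 3 = b1*c2*c3 + c1*b2*c3 + c1*c2*b3"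
    "f 3 3 3 = c1*c2*c3"
    using h unfolding cubic_nf lf_prod by simp_all
  show "f 1 1 3 * (4 * f 1 1 3 * f 2 2 3 - (f 1 2 3)\<^sup>2)
       + 3 * ((f 1 1 2)\<^sup>2 - 3 * f 1 1 1 * f 1 2 2) * f 3 3 3 = 0 \<and>
     f 1 2 3 * (4 * f 1 1 3 * f 2 2 3 - (f 1 2 3)\<^sup>2)
       + 3 * (f 1 1 2 * f 1 2 2 - 9 * f 1 1 1 * f 2 2 2) * f 3 3 3 = 0 \<and>
     f 2 2 3 * (4 * f 1 1 3 * f 2 2 3 - (f 1 2 3)\<^sup>2)
       + 3 * ((f 1 2 2)\<^sup>2 - 3 * f 1 1 2 * f 2 2 2) * f 3 3 3 = 0"
    by (rule fwd[OF _ _ _ eqs(1-7) eqs(10)]) (use assms eqs in auto)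
next
  assume E: "f 1 1 3 * (4 * f 1 1 3 * f 2 2 3 - (f 1 2 3)\<^sup>2)
       + 3 * ((f 1 1 2)\<^sup>2 - 3 * f 1 1 1 * f 1 2 2) * f 3 3 3 = 0 \<and>
     f 1 2 3 * (4 * f 1 1 3 * f 2 2 3 - (f 1 2 3)\<^sup>2)
       + 3 * (f 1 1 2 * f 1 2 2 - 9 * f 1 1 1 * f 2 2 2) * f 3 3 3 = 0 \<and>
     f 2 2 3 * (4 * f 1 1 3 * f 2 2 3 - (f 1 2 3)\<^sup>2)
       + 3 * ((f 1 2 2)\<^sup>2 - 3 * f 1 1 2 * f 2 2 2) * f 3 3 3 = 0"
  have D: "4 * f 1 1 3 * f 2 2 3 - (f 1 2 3)^2 \<noteq> 0"
    using assms(2) unfolding hess333[of f, OF assms(3,4)] by simp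
  obtain a1 b1 c1 a2 b2 c2 a3 b3 c3 where g:
    "f 1 1 1 = a1*a2*a3" "f 1 1 2 = a1*a2*b3 + a1*b2*a3 + b1*a2*a3"
    "f 1 2 2 = a1*b2*b3 + b1*a2*b3 + b1*b2*a3" "f 2 2 2 = b1*b2*b3"
    "f 1 1 3 = a1*a2*c3 + a1*c2*a3 + c1*a2*a3"
    "f 1 2 3 = a1*b2*c3 + a1*c2*b3 + b1*a2*c3 + b1*c2*a3 + c1*a2*b3 + c1*b2*a3"
    "f 2 2 3 = b1*b2*c3 + b1*c2*b3 + c1*b2*b3"
    "0 = a1*c2*c3 + c1*a2*c3 + c1*c2*a3"
    "0 = b1*c2*c3 + c1*b2*c3 + c1*c2*b3"
    "f 3 3 3 = c1*c2*c3"
    using rev_alg[where a="f 3 3 3" and p="f 1 1 3" and q="f 1 2 3" and r="f 2 2 3" and s="f 1 1 1" and t="f 1 1 2" and u="f 1 2 2" and v="f 2 2 2", OF assms(1) D] E by blast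
  have "cubic f = linear_form a1 b1 c1 * linear_form a2 b2 c2 * linear_form a3 b3 c3"
    unfolding cubic_nf lf_prod assms(3,4) g(8,9)[symmetric] g(1-7,10) ..
  thus "completely_reducible (cubic f)" unfolding completely_reducible_def by blast
qed

end
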